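(* Assume the rearrangement setting described in the context, and assume additionally that: - $X$ is convex in $R$; and - there is no walk in $R$ that starts in $M$ and ends in $Y$, and no walk in $R$ that starts in $Y$ and ends in $M$. If $R\in\mathfrak{T}_a$, then $S\in\mathfrak{T}_a$.
   Context: **Digraphs.** - A digraph $G$ is a pair $(V(G),A(G))$, where $V(G)$ is a finite non-empty set and $A(G)\subseteq V(G)\times V(G)$. Arcs are written $vw$. - $G^*$ is $G$ with all loops $vv$ removed. - Two vertices $u,w$ are adjacent if $uw\in A(G)$ or $wu\in A(G)$. $N_G(v)$ is the set of $w\ne v$ adjacent to $v$. - A walk is a sequence $v_0,\dots,v_I$ with $I\ge1$ and $v_{i-1}v_i\in A(G)$ for all $i$. It is closed if $v_0=v_I$. - A set $X$ is convex if every walk starting and ending in $X$ has all its vertices in $X$. - $\mathfrak{T}_a$ is the class of digraphs $G$ such that $G^*$ contains no closed walk; equivalently, every closed walk in $G$ is constant. **Rearrangement setting.** - $R=(Z,A(R))$ is a digraph. - $X,M\subseteq Z$ are disjoint. - $Y\subseteq Z$ satisfies $M\cap Y=\emptyset$ and $M\cap N_R(y)=\emptyset$ for all $y\in Y$. - $\beta:X\to Y$ is a map. - $S$ is the digraph with $V(S)=Z$ and $A(S)=A_r\cup A_d\cup A_u$, where: - $A_r=A(R)\setminus((M\times X)\cup(X\times M))$; - $A_d=\{m\beta(x): mx\in A(R)\cap(M\times X)\}$; - $A_u=\{\beta(x)m: xm\in A(R)\cap(X\times M)\}$. *)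

theory Defs
  imports Main
begin

definition digraph :: "'a set \<Rightarrow> ('a \<times> 'a) set \<Rightarrow> bool" where
  "digraph V A \<longleftrightarrow> finite V \<and> V \<noteq> {} \<and> A \<subseteq> V \<times> V"

definition noloops :: "('a \<times> 'a) set \<Rightarrow> ('a \<times> 'a) set" where
  "noloops A = A - {(v, v) | v. True}"

definition nbhd :: "('a \<times> 'a) set \<Rightarrow> 'a \<Rightarrow> 'a set" where
  "nbhd A v = {w. w \<noteq> v \<and> ((v, w) \<in> A \<or> (w, v) \<in> A)}"

definition is_walk :: "('a \<times> 'a) set \<Rightarrow> 'a list \<Rightarrow> bool" where
  "is_walk A ws \<longleftrightarrow> 2 \<le> length ws \<and> (\<forall>i. Suc i < length ws \<longrightarrow> (ws ! i, ws ! Suc i) \<in> A)"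

definition is_closed_walk :: "('a \<times> 'a) set \<Rightarrow> 'a list \<Rightarrow> bool" where
  "is_closed_walk A ws \<longleftrightarrow> is_walk A ws \<and> hd ws = last ws"

definition convex :: "('a \<times> 'a) set \<Rightarrow> 'a set \<Rightarrow> bool" where
  "convex A X \<longleftrightarrow> (\<forall>ws. is_walk A ws \<and> hd ws \<in> X \<and> last ws \<in> X \<longrightarrow> set ws \<subseteq> X)"

definition in_Ta :: "'a set \<Rightarrow> ('a \<times> 'a) set \<Rightarrow> bool" where
  "in_Ta V A \<longleftrightarrow> digraph V A \<and> \<not> (\<exists>ws. is_closed_walk (noloops A) ws)"

definition rearr_arcs :: "('a \<times> 'a) set \<Rightarrow> 'a set \<Rightarrow> 'a set \<Rightarrow> ('a \<Rightarrow> 'a) \<Rightarrow> ('a \<times> 'a) set" where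
  "rearr_arcs AR X M \<beta> =
     (AR - ((M \<times> X) \<union> (X \<times> M)))
     \<union> {(m, \<beta> x) | m x. (m, x) \<in> AR \<inter> (M \<times> X)}
     \<union> {(\<beta> x, m) | x m. (x, m) \<in> AR \<inter> (X \<times> M)}"

end

theory Submission
  imports Defs
begin

definition edgesP :: "('a \<times> 'a) set \<Rightarrow> 'a list \<Rightarrow> bool" where
  "edgesP A ws \<longleftrightarrow> (\<forall>i. Suc i < length ws \<longrightarrow> (ws ! i, ws ! Suc i) \<in> A)"

lemma edgesP_snoc:
  assumes "edgesP A ws" "ws \<noteq> []" "(last ws, c) \<in> A"
  shows "edgesP A (ws @ [c])"
  unfolding edgesP_def
proof (intro allI impI)
  fix i assume i: "Suc i < length (ws @ [c])"
  show "((ws @ [c]) ! i, (ws @ [c]) ! Suc i) \<in> A"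
  proof (cases "Suc i < length ws")
    case True
    then show ?thesis using assms(1) by (simp add: edgesP_def nth_append)
  next
    case False
    then have "Suc i = length ws" using i by simp
    then have "i = length ws - 1" by simp
    then show ?thesis using assms(2,3) \<open>Suc i = length ws\<close> by (simp add: nth_append last_conv_nth)
  qed
qed

lemma edgesP_extend:
  assumes "(b, c) \<in> A\<^sup>+"
  shows "edgesP A ws \<Longrightarrow> ws \<noteq> [] \<Longrightarrow> last ws = b \<Longrightarrow>
    \<exists>ws'. edgesP A ws' \<and> hd ws' = hd ws \<and> last ws' = c \<and> set ws \<subseteq> set ws' \<and> length ws < length ws'"
  using assms
proof (induction rule: trancl_induct)
  case (base y)
  then show ?case using edgesP_snoc[of A ws y] by (intro exI[of _ "ws @ [y]"]) auto
next
  case (step y z)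
  then obtain ws' where w: "edgesP A ws'" "hd ws' = hd ws" "last ws' = y" "set ws \<subseteq> set ws'"
    "length ws < length ws'" by blast
  then have ne: "ws' \<noteq> []" by auto
  show ?case using edgesP_snoc[OF w(1) ne] w ne step(2)
    by (intro exI[of _ "ws' @ [z]"]) auto
qed

lemma walk_through:
  assumes "(a, b) \<in> A\<^sup>+" "(b, c) \<in> A\<^sup>+"
  shows "\<exists>ws. is_walk A ws \<and> hd ws = a \<and> last ws = c \<and> b \<in> set ws"
proof -
  have e: "edgesP A [a]" by (simp add: edgesP_def)
  obtain w1 where w1: "edgesP A w1" "hd w1 = a" "last w1 = b" "set [a] \<subseteq> set w1" "1 < length w1"
    using edgesP_extend[OF assms(1) e] by auto
  have ne: "w1 \<noteq> []" using w1 by auto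
  obtain w2 where w2: "edgesP A w2" "hd w2 = hd w1" "last w2 = c" "set w1 \<subseteq> set w2" "length w1 < length w2"
    using edgesP_extend[OF assms(2) w1(1) ne w1(3)] by auto
  have "b \<in> set w1" using w1(3) ne by auto
  then show ?thesis using w1 w2 unfolding is_walk_def edgesP_def
    by (intro exI[of _ w2]) auto
qed

lemma walk_of_trancl:
  assumes "(a, b) \<in> A\<^sup>+"
  shows "\<exists>ws. is_walk A ws \<and> hd ws = a \<and> last ws = b"
proof -
  have e: "edgesP A [a]" by (simp add: edgesP_def)
  obtain w1 where w1: "edgesP A w1" "hd w1 = a" "last w1 = b" "1 < length w1"
    using edgesP_extend[OF assms(1) e] by auto
  then show ?thesis unfolding is_walk_def edgesP_def by (intro exI[of _ w1]) auto
qed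

lemma trancl_of_walk:
  assumes "is_walk A ws"
  shows "(hd ws, last ws) \<in> A\<^sup>+"
proof -
  have k: "\<And>k. 1 \<le> k \<Longrightarrow> k < length ws \<Longrightarrow> (ws ! 0, ws ! k) \<in> A\<^sup>+"
  proof -
    fix k :: nat assume "1 \<le> k" "k < length ws"
    then show "(ws ! 0, ws ! k) \<in> A\<^sup>+"
    proof (induction k rule: dec_induct)
      case base
      then show ?case using assms by (auto simp: is_walk_def)
    next
      case (step n)
      then have "(ws ! n, ws ! Suc n) \<in> A" using assms by (auto simp: is_walk_def)
      then show ?case using step by auto
    qed
  qed
  have ne: "ws \<noteq> []" and l: "2 \<le> length ws" using assms by (auto simp: is_walk_def)
  then show ?thesis using k[of "length ws - 1"] by (simp add: hd_conv_nth last_conv_nth)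
qed

lemma trancl_split:
  assumes "(a, b) \<in> (E1 \<union> E2)\<^sup>+"
  shows "(a, b) \<in> E1\<^sup>+ \<or> (\<exists>p q. (p, q) \<in> E2 \<and> (a, p) \<in> (E1 \<union> E2)\<^sup>* \<and> (q, b) \<in> (E1 \<union> E2)\<^sup>*)"
  using assms
proof (induction rule: trancl_induct)
  case (base y)
  then show ?case by auto
next
  case (step y z)
  from step(3) show ?case
  proof
    assume h: "(a, y) \<in> E1\<^sup>+"
    show ?thesis
    proof (cases "(y, z) \<in> E1")
      case True then show ?thesis using h by auto
    next
      case False
      then have "(y, z) \<in> E2" using step(2) by auto
      then show ?thesis using step(1) by (auto intro: trancl_into_rtrancl)
    qed
  next
    assume "\<exists>p q. (p, q) \<in> E2 \<and> (a, p) \<in> (E1 \<union> E2)\<^sup>* \<and> (q, y) \<in> (E1 \<union> E2)\<^sup>*"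
    then show ?thesis using step(2) by (meson rtrancl.rtrancl_into_rtrancl)
  qed
qed

theorem lemma7:
  fixes Z X M Y :: "'a set" and AR :: "('a \<times> 'a) set" and \<beta> :: "'a \<Rightarrow> 'a"
  assumes R: "digraph Z AR"
    and XZ: "X \<subseteq> Z" and MZ: "M \<subseteq> Z" and YZ: "Y \<subseteq> Z"
    and XM: "X \<inter> M = {}"
    and MY: "M \<inter> Y = {}"
    and MN: "\<forall>y\<in>Y. M \<inter> nbhd AR y = {}"
    and beta: "\<forall>x\<in>X. \<beta> x \<in> Y"
    and conv: "convex AR X"
    and noMY: "\<not> (\<exists>ws. is_walk AR ws \<and> hd ws \<in> M \<and> last ws \<in> Y)"
    and noYM: "\<not> (\<exists>ws. is_walk AR ws \<and> hd ws \<in> Y \<and> last ws \<in> M)"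
    and Ta: "in_Ta Z AR"
  shows "in_Ta Z (rearr_arcs AR X M \<beta>)"
proof -
  define S where "S = rearr_arcs AR X M \<beta>"
  have Scases: "\<And>b c. (b, c) \<in> S \<Longrightarrow> (b, c) \<in> AR \<or>
      (\<exists>x. b \<in> M \<and> x \<in> X \<and> c = \<beta> x \<and> (b, x) \<in> AR) \<or>
      (\<exists>x. c \<in> M \<and> x \<in> X \<and> b = \<beta> x \<and> (x, c) \<in> AR)"
    unfolding S_def rearr_arcs_def by blast
  have nMY: "\<And>m y. m \<in> M \<Longrightarrow> y \<in> Y \<Longrightarrow> (m, y) \<in> AR\<^sup>* \<Longrightarrow> False"
  proof -
    fix m y assume a: "m \<in> M" "y \<in> Y" "(m, y) \<in> AR\<^sup>*"
    then have "m \<noteq> y" using MY by auto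
    then have "(m, y) \<in> AR\<^sup>+" using a(3) by (simp add: rtrancl_eq_or_trancl)
    then show False using walk_of_trancl noMY a by metis
  qed
  have nYM: "\<And>m y. m \<in> M \<Longrightarrow> y \<in> Y \<Longrightarrow> (y, m) \<in> AR\<^sup>* \<Longrightarrow> False"
  proof -
    fix m y assume a: "m \<in> M" "y \<in> Y" "(y, m) \<in> AR\<^sup>*"
    then have "m \<noteq> y" using MY by auto
    then have "(y, m) \<in> AR\<^sup>+" using a(3) by (simp add: rtrancl_eq_or_trancl)
    then show False using walk_of_trancl noYM a by metis
  qed
  define K where "K b \<longleftrightarrow> (\<exists>x0 m0. x0 \<in> X \<and> m0 \<in> M \<and> (x0, m0) \<in> AR \<and> (m0, b) \<in> AR\<^sup>*)" for b
  have Knot: "\<And>b. K b \<Longrightarrow> b \<in> Y \<Longrightarrow> False" unfolding K_def using nMY by blast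
  have Kstep: "\<And>b c. K b \<Longrightarrow> (b, c) \<in> S \<Longrightarrow> K c"
  proof -
    fix b c assume kb: "K b" and e: "(b, c) \<in> S"
    then obtain x0 m0 where k: "x0 \<in> X" "m0 \<in> M" "(x0, m0) \<in> AR" "(m0, b) \<in> AR\<^sup>*"
      unfolding K_def by blast
    from Scases[OF e] show "K c"
    proof (elim disjE exE conjE)
      assume "(b, c) \<in> AR"
      then show "K c" using k unfolding K_def by (meson rtrancl.rtrancl_into_rtrancl)
    next
      fix x assume h: "b \<in> M" "x \<in> X" "c = \<beta> x" "(b, x) \<in> AR"
      have "(m0, x) \<in> AR\<^sup>+" using k(4) h(4) by (meson rtrancl_into_trancl1)
      then obtain ws where "is_walk AR ws" "hd ws = x0" "last ws = x" "m0 \<in> set ws"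
        using walk_through[of x0 m0 AR x] k(3) by blast
      then have "m0 \<in> X" using conv k(1) h(2) unfolding convex_def by blast
      then show "K c" using k(2) XM by blast
    next
      fix x assume h: "c \<in> M" "x \<in> X" "b = \<beta> x" "(x, c) \<in> AR"
      then have "b \<in> Y" using beta by auto
      then show "K c" using Knot kb by blast
    qed
  qed
  have Kstar: "\<And>b c. (b, c) \<in> S\<^sup>* \<Longrightarrow> K b \<Longrightarrow> K c"
  proof -
    fix b c assume "(b, c) \<in> S\<^sup>*" "K b"
    then show "K c" by (induction rule: rtrancl_induct) (auto intro: Kstep)
  qed
  define I where "I y b \<longleftrightarrow> (y, b) \<in> AR\<^sup>* \<or> K b" for y b
  have Istep: "\<And>y b c. y \<in> Y \<Longrightarrow> I y b \<Longrightarrow> (b, c) \<in> S \<Longrightarrow> I y c"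
  proof -
    fix y b c assume y: "y \<in> Y" and ib: "I y b" and e: "(b, c) \<in> S"
    show "I y c"
    proof (cases "K b")
      case True then show ?thesis using Kstep e unfolding I_def by blast
    next
      case False
      then have yb: "(y, b) \<in> AR\<^sup>*" using ib unfolding I_def by blast
      from Scases[OF e] show ?thesis
      proof (elim disjE exE conjE)
        assume "(b, c) \<in> AR"
        then show ?thesis using yb unfolding I_def by (meson rtrancl.rtrancl_into_rtrancl)
      next
        fix x assume h: "b \<in> M" "x \<in> X" "c = \<beta> x" "(b, x) \<in> AR"
        then show ?thesis using nYM y yb by blast
      next
        fix x assume h: "c \<in> M" "x \<in> X" "b = \<beta> x" "(x, c) \<in> AR"
        then have "K c" unfolding K_def by blast
        then show ?thesis unfolding I_def by blast
      qed
    qed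
  qed
  have Istar: "\<And>y c. y \<in> Y \<Longrightarrow> (y, c) \<in> S\<^sup>* \<Longrightarrow> I y c"
  proof -
    fix y c assume y: "y \<in> Y" and p: "(y, c) \<in> S\<^sup>*"
    from p show "I y c"
    proof (induction rule: rtrancl_induct)
      case base then show ?case unfolding I_def by blast
    next
      case (step b c) then show ?case using Istep y by blast
    qed
  qed
  have dg: "digraph Z S"
  proof -
    have "AR \<subseteq> Z \<times> Z" using R by (simp add: digraph_def)
    then have "S \<subseteq> Z \<times> Z" unfolding S_def rearr_arcs_def using MZ YZ beta by blast
    then show ?thesis using R by (simp add: digraph_def)
  qed
  have nocyc: "\<not> (\<exists>ws. is_closed_walk (noloops S) ws)"
  proof
    assume "\<exists>ws. is_closed_walk (noloops S) ws"
    then obtain ws where w: "is_walk (noloops S) ws" "hd ws = last ws"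
      unfolding is_closed_walk_def by blast
    define v where "v = hd ws"
    define E1 where "E1 = noloops S \<inter> noloops AR"
    define E2 where "E2 = noloops S - noloops AR"
    have EE: "noloops S = E1 \<union> E2" unfolding E1_def E2_def by blast
    have vv: "(v, v) \<in> (E1 \<union> E2)\<^sup>+" using trancl_of_walk[OF w(1)] w(2) EE v_def by simp
    from trancl_split[OF vv] show False
    proof
      assume "(v, v) \<in> E1\<^sup>+"
      then have "(v, v) \<in> (noloops AR)\<^sup>+"
        by (rule trancl_mono) (auto simp: E1_def)
      then obtain ws' where "is_walk (noloops AR) ws'" "hd ws' = v" "last ws' = v"
        using walk_of_trancl by metis
      then show False using Ta unfolding in_Ta_def is_closed_walk_def by auto
    next
      assume "\<exists>p q. (p, q) \<in> E2 \<and> (v, p) \<in> (E1 \<union> E2)\<^sup>* \<and> (q, v) \<in> (E1 \<union> E2)\<^sup>*"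
      then obtain p q where pq: "(p, q) \<in> E2" "(v, p) \<in> (noloops S)\<^sup>*" "(q, v) \<in> (noloops S)\<^sup>*"
        using EE by auto
      have "(q, p) \<in> (noloops S)\<^sup>*" using pq by auto
      then have qp: "(q, p) \<in> S\<^sup>*" by (rule rtrancl_mono[THEN subsetD, rotated]) (auto simp: noloops_def)
      have pqS: "(p, q) \<in> S" "(p, q) \<notin> AR" using pq(1) unfolding E2_def noloops_def by auto
      from Scases[OF pqS(1)] show False
      proof (elim disjE exE conjE)
        assume "(p, q) \<in> AR" then show False using pqS by blast
      next
        fix x assume h: "p \<in> M" "x \<in> X" "q = \<beta> x" "(p, x) \<in> AR"
        then have qY: "q \<in> Y" using beta by auto
        have "I q p" using Istar[OF qY qp] .
        then show False
        proof (unfold I_def, elim disjE)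
          assume "(q, p) \<in> AR\<^sup>*" then show False using nYM h(1) qY by blast
        next
          assume "K p" then have "K q" using Kstep pqS(1) by blast
          then show False using Knot qY by blast
        qed
      next
        fix x assume h: "q \<in> M" "x \<in> X" "p = \<beta> x" "(x, q) \<in> AR"
        then have "K q" unfolding K_def by blast
        then have "K p" using Kstar qp by blast
        then show False using Knot h beta by auto
      qed
    qed
  qed
  show ?thesis using dg nocyc unfolding in_Ta_def S_def by blast
qed

end
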